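(* Let $n\ge1$, $s\in(0,1)$, $\varepsilon>0$ and $u\in C^{s+\varepsilon}_{loc}(\mathbb{R}^n)\cap L^1_{s/2}(\mathbb{R}^n)$. Then there is a constant $C>0$ depending only on $n$ and $s$ such that for all $R\in(0,1)$, $$\mathfrak{J}^s_{ACF}(u,R)\le\frac{C}{R^{2s}}\int_{\mathbb{R}^n}\frac{|\nabla^s u(x)|^2}{|x|^{n-2s}}\,dx.$$
   Context: $B_r$ is the open ball of radius $r$ centered at $0$. $L^1_{s/2}(\mathbb{R}^n):=\{u\in L^1_{loc}:\int\frac{|u(x)|}{1+|x|^{n+s}}dx<\infty\}$. For $\gamma>0$ not an integer, $C^{\gamma}_{loc}$ denotes $C^{k,\gamma-k}_{loc}$ with $k=\lfloor\gamma\rfloor$. With $\mu_{n,s}:=2^s\pi^{-n/2}\frac{\Gamma((n+s+1)/2)}{\Gamma((1-s)/2)}$, $\partial^s_i u(x):=\mu_{n,s}\int_{\mathbb{R}^n}\frac{(y_i-x_i)(u(y)-u(x))}{|y-x|^{n+s+1}}dy$, $\nabla^s u:=(\partial^s_1u,\dots,\partial^s_nu)$, $|\nabla^s u|$ its Euclidean norm. With $a_{n,s}:=\Gamma(n/2)\pi^{-n/2-1}\sin(\pi s)$, $K^s_r(0,y):=a_{n,s}\left(\frac{r^2}{|y|^2-r^2}\right)^s\frac{1}{|y|^n}$ for $|y|>r$, and $\mathfrak{J}^s_{ACF}(u,R):=\frac{1}{R^{1+s}}\int_0^R r^s\int_{\mathbb{R}^n\setminus B_r}K^s_r(0,y)|\nabla^s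 u(y)|^2\,dy\,dr$. *)

theory Defs
  imports "HOL-Analysis.Analysis"
begin

fun holder_k :: "nat \<Rightarrow> real \<Rightarrow> (real^'n \<Rightarrow> real) \<Rightarrow> bool" where
  "holder_k 0 \<alpha> f =
     (\<forall>K. compact K \<longrightarrow> (\<exists>M. \<forall>x\<in>K. \<forall>y\<in>K. \<bar>f x - f y\<bar> \<le> M * dist x y powr \<alpha>))"
| "holder_k (Suc k) \<alpha> f =
     ((\<forall>x. f differentiable (at x)) \<and>
      (\<forall>i. holder_k k \<alpha> (\<lambda>x. frechet_derivative f (at x) (axis i 1))))"

(* C^gamma_loc := C^{k, gamma-k}_loc with k = ceiling gamma - 1
   (= floor gamma for non-integer gamma; C^{gamma-1,1} for integer gamma) *)
definition holder_loc :: "real \<Rightarrow> (real^'n \<Rightarrow> real) \<Rightarrow> bool" where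
  "holder_loc \<gamma> f = holder_k (nat (\<lceil>\<gamma>\<rceil> - 1)) (\<gamma> - real (nat (\<lceil>\<gamma>\<rceil> - 1))) f"

definition L1_half :: "real \<Rightarrow> (real^'n \<Rightarrow> real) \<Rightarrow> bool" where
  "L1_half s u = (u \<in> borel_measurable lborel \<and>
     (\<forall>K. compact K \<longrightarrow> set_integrable lborel K u) \<and>
     integrable lborel (\<lambda>x. \<bar>u x\<bar> / (1 + norm x powr (real CARD('n) + s))))"

definition mu_ns :: "nat \<Rightarrow> real \<Rightarrow> real" where
  "mu_ns n s = 2 powr s * pi powr (- real n / 2) *
     Gamma ((real n + s + 1) / 2) / Gamma ((1 - s) / 2)"

definition frac_partial :: "real \<Rightarrow> (real^'n \<Rightarrow> real) \<Rightarrow> 'n \<Rightarrow> real^'n \<Rightarrow> real" where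
  "frac_partial s u i x = mu_ns CARD('n) s *
     (\<integral>y. (y $ i - x $ i) * (u y - u x) / norm (y - x) powr (real CARD('n) + s + 1) \<partial>lborel)"

definition frac_grad_norm :: "real \<Rightarrow> (real^'n \<Rightarrow> real) \<Rightarrow> real^'n \<Rightarrow> real" where
  "frac_grad_norm s u x = norm (\<chi> i. frac_partial s u i x)"

definition a_ns :: "nat \<Rightarrow> real \<Rightarrow> real" where
  "a_ns n s = Gamma (real n / 2) * pi powr (- real n / 2 - 1) * sin (pi * s)"

(* K^s_r(0,y), for |y| > r *)
definition Ker :: "real \<Rightarrow> real \<Rightarrow> real^'n \<Rightarrow> real" where
  "Ker s r y = a_ns CARD('n) s * (r\<^sup>2 / ((norm y)\<^sup>2 - r\<^sup>2)) powr s / norm y ^ CARD('n)"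

definition J_ACF :: "real \<Rightarrow> (real^'n \<Rightarrow> real) \<Rightarrow> real \<Rightarrow> ennreal" where
  "J_ACF s u R = ennreal (1 / R powr (1 + s)) *
     (\<integral>\<^sup>+ r. indicator {0<..<R} r * ennreal (r powr s) *
        (\<integral>\<^sup>+ y. indicator {y. r < norm y} y *
            ennreal (Ker s r y * (frac_grad_norm s u y)\<^sup>2) \<partial>(lborel :: (real^'n) measure)) \<partial>lborel)"

end

theory Submission imports Defs begin
lemma int_pow:
  fixes s L :: real
  assumes s: "0 < s" "s < 1" and L: "0 \<le> L"
  shows "(\<integral>\<^sup>+ r. ennreal (indicator {0..L} r * r powr (-s)) \<partial>lborel) = ennreal (L powr (1-s) / (1-s))"
proof -
  have h0: "((\<lambda>x. x powr (-s)) has_integral (L powr (-s+1) / (-s+1))) {0..L}"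
    by (rule has_integral_powr_from_0) (use s L in auto)
  have h: "((\<lambda>x. x powr (-s)) has_integral (L powr (1-s) / (1-s))) {0..L}"
    using h0 by (simp add: add.commute)
  have "((\<lambda>x. indicator {0..L} x * x powr (-s)) has_integral (L powr (1-s) / (1-s))) UNIV"
  proof -
    have "(\<lambda>x. indicator {0..L} x * x powr (-s)) = (\<lambda>x. if x \<in> {0..L} then x powr (-s) else 0)"
      by (auto simp: indicator_def fun_eq_iff)
    then show ?thesis using h has_integral_restrict_UNIV[of "{0..L}" "\<lambda>x. x powr (-s)"] by simp
  qed
  then show ?thesis
    by (intro nn_integral_has_integral_lborel) (auto simp: indicator_def)
qed

lemma int_pow2:
  fixes s L :: real
  assumes s: "0 < s" "s < 1" and L: "0 \<le> L"
  shows "(\<integral>\<^sup>+ r. ennreal (indicator {L/2..L} r * (L - r) powr (-s)) \<partial>lborel) = ennreal ((L/2) powr (1-s) / (1-s))"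
proof -
  have "(\<integral>\<^sup>+ r. ennreal (indicator {L/2..L} r * (L - r) powr (-s)) \<partial>lborel)
     = ennreal \<bar>-1::real\<bar> * (\<integral>\<^sup>+ x. ennreal (indicator {L/2..L} (L + -1 * x) * (L - (L + -1 * x)) powr (-s)) \<partial>lborel)"
    by (rule nn_integral_real_affine) auto
  also have "\<dots> = (\<integral>\<^sup>+ x. ennreal (indicator {0..L/2} x * x powr (-s)) \<partial>lborel)"
  proof -
    have eq: "indicator {L/2..L} (L + -1 * x) * (L - (L + -1 * x)) powr (-s) = indicator {0..L/2} x * x powr (-s)" for x :: real
      unfolding indicator_def by (cases "0 \<le> x \<and> x \<le> L/2") auto
    show ?thesis by (simp only: eq) simp
  qed
  also have "\<dots> = ennreal ((L/2) powr (1-s) / (1-s))"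
    by (rule int_pow) (use s L in auto)
  finally show ?thesis .
qed
lemma q2l: "0 < q \<Longrightarrow> q\<^sup>2 powr s = q powr (2 * s)" for q s :: real
proof -
  assume q: "0 < q"
  have "q powr 2 = q\<^sup>2" using powr_realpow[of q 2] q by simp
  moreover have "q powr (2 * s) = (q powr 2) powr s" by (simp add: powr_powr)
  ultimately show ?thesis by simp
qed
lemma ptwise:
  fixes s r q :: real
  assumes s: "0 < s" "s < 1" and r: "0 < r" "r < q"
  shows "r powr s * (r\<^sup>2 / (q\<^sup>2 - r\<^sup>2)) powr s \<le>
    2 * q powr (2 * s) * (r powr (-s) + (if q/2 \<le> r then (q - r) powr (-s) else 0))"
proof -
  have pos: "0 < q\<^sup>2 - r\<^sup>2" using r by (simp add: power_strict_mono)
  have eq: "r powr s * (r\<^sup>2 / (q\<^sup>2 - r\<^sup>2)) powr s = (r^3 / (q\<^sup>2 - r\<^sup>2)) powr s"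
    using r pos by (simp add: powr_mult[symmetric] power3_eq_cube power2_eq_square mult.assoc)
  have nn: "0 \<le> r powr (-s)" "0 \<le> (if q/2 \<le> r then (q - r) powr (-s) else 0)" by auto
  show ?thesis
  proof (cases "q/2 \<le> r")
    case True
    have "r^3 / (q\<^sup>2 - r\<^sup>2) \<le> q\<^sup>2 / (q - r)"
    proof -
      have a: "r^3 \<le> q^3" using r by (simp add: power_mono)
      have b: "q^3 \<le> q\<^sup>2 * (q + r)" using r by (simp add: power2_eq_square power3_eq_cube algebra_simps)
      have c: "q\<^sup>2 - r\<^sup>2 = (q - r) * (q + r)" by (simp add: power2_eq_square algebra_simps)
      have "r^3 / (q\<^sup>2 - r\<^sup>2) \<le> q\<^sup>2 * (q + r) / (q\<^sup>2 - r\<^sup>2)"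
        using a b pos by (intro divide_right_mono) auto
      also have "\<dots> = q\<^sup>2 / (q - r)" using r unfolding c by simp
      finally show ?thesis .
    qed
    then have "(r^3 / (q\<^sup>2 - r\<^sup>2)) powr s \<le> (q\<^sup>2 / (q - r)) powr s"
      using r pos s by (intro powr_mono2) auto
    also have "\<dots> = q powr (2 * s) * (q - r) powr (-s)"
    proof -
      have q2: "q\<^sup>2 powr s = q powr (2 * s)" using r q2l[of q s] by simp
      have "(q\<^sup>2 / (q - r)) powr s = q\<^sup>2 powr s / (q - r) powr s" using r by (simp add: powr_divide)
      then show ?thesis using r by (simp add: q2 powr_minus_divide)
    qed
    also have "\<dots> \<le> 2 * q powr (2 * s) * (r powr (-s) + (if q/2 \<le> r then (q - r) powr (-s) else 0))"
      using True nn by (simp add: algebra_simps)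
    finally show ?thesis using eq by simp
  next
    case False
    have "r^3 / (q\<^sup>2 - r\<^sup>2) \<le> 2 * q\<^sup>2 / r"
    proof -
      have "r * r \<le> (q/2) * (q/2)" using False r by (intro mult_mono) auto
      then have "4 * (r * r) \<le> q * q" by simp
      moreover have "0 \<le> r * r" by simp
      ultimately have "q\<^sup>2 \<le> 2 * (q\<^sup>2 - r\<^sup>2)" unfolding power2_eq_square by (smt (verit))
      moreover have "r^4 \<le> q^4" using r by (simp add: power_mono)
      ultimately have "r^4 * q\<^sup>2 \<le> q^4 * (2 * (q\<^sup>2 - r\<^sup>2))"
        by (intro mult_mono) auto
      then have "q\<^sup>2 * r^4 \<le> q\<^sup>2 * (2 * q\<^sup>2 * (q\<^sup>2 - r\<^sup>2))"
        by (simp add: power4_eq_xxxx power2_eq_square algebra_simps)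
      then have "r^4 \<le> 2 * q\<^sup>2 * (q\<^sup>2 - r\<^sup>2)" using r
        by (simp add: mult_le_cancel_left_pos)
      then show ?thesis using r pos
        by (simp add: divide_simps power4_eq_xxxx power3_eq_cube mult.assoc)
    qed
    then have "(r^3 / (q\<^sup>2 - r\<^sup>2)) powr s \<le> (2 * q\<^sup>2 / r) powr s"
      using r pos s by (intro powr_mono2) auto
    also have "\<dots> = 2 powr s * q powr (2 * s) * r powr (-s)"
    proof -
      have q2: "q\<^sup>2 powr s = q powr (2 * s)" using r q2l[of q s] by simp
      have "(2 * q\<^sup>2 / r) powr s = (2 * q\<^sup>2) powr s / r powr s" using r by (simp add: powr_divide)
      also have "(2 * q\<^sup>2) powr s = 2 powr s * q\<^sup>2 powr s" by (simp add: powr_mult)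
      finally show ?thesis using r by (simp add: q2 powr_minus_divide)
    qed
    also have "\<dots> \<le> 2 * q powr (2 * s) * r powr (-s)"
    proof -
      have "2 powr s \<le> 2 powr 1" using s by (intro powr_mono) auto
      then show ?thesis by (intro mult_right_mono) auto
    qed
    also have "\<dots> \<le> 2 * q powr (2 * s) * (r powr (-s) + (if q/2 \<le> r then (q - r) powr (-s) else 0))"
      using False by simp
    finally show ?thesis using eq by simp
  qed
qed

lemma per_y:
  fixes y :: "real^'n" and R s c :: real
  assumes s: "0 < s" "s < 1" and R: "0 < R"
  shows "ennreal (1 / R powr (1 + s)) *
     (\<integral>\<^sup>+ r. indicator {0<..<R} r * ennreal (r powr s) *
        (indicator {y. r < norm y} y * ennreal (Ker s r y * c\<^sup>2)) \<partial>lborel)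
   \<le> ennreal (4 * max (a_ns CARD('n) s) 0 / (1 - s) / R powr (2 * s)) *
      ennreal (c\<^sup>2 / norm y powr (real CARD('n) - 2 * s))"
proof (cases "norm y = 0")
  case True
  have "(\<integral>\<^sup>+ r. indicator {0<..<R} r * ennreal (r powr s) *
        (indicator {y. r < norm y} y * ennreal (Ker s r y * c\<^sup>2)) \<partial>lborel) = (\<integral>\<^sup>+ (r::real). 0 \<partial>lborel)"
    by (intro nn_integral_cong) (auto simp: True indicator_def)
  then show ?thesis by simp
next
  case False
  define q where "q = norm y"
  have q: "0 < q" using False by (simp add: q_def)
  define A where "A = max (a_ns CARD('n) s) 0"
  define B where "B = 2 * A * c\<^sup>2 * q powr (2 * s) / q ^ CARD('n)"
  define g1 where "g1 r = indicator {0..R} r * r powr (-s)" for r :: real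
  define g2 where "g2 r = (if q \<le> 2 * R then indicator {q/2..q} r * (q - r) powr (-s) else 0)" for r :: real
  have A0: "0 \<le> A" by (simp add: A_def)
  have B0: "0 \<le> B" using A0 q by (simp add: B_def)
  have g10: "0 \<le> g1 r" for r by (simp add: g1_def)
  have g20: "0 \<le> g2 r" for r by (simp add: g2_def)
  have [measurable]: "g1 \<in> borel_measurable borel" unfolding g1_def by measurable
  have [measurable]: "g2 \<in> borel_measurable borel" unfolding g2_def by measurable
  have pw: "indicator {0<..<R} r * ennreal (r powr s) *
        (indicator {y. r < norm y} y * ennreal (Ker s r y * c\<^sup>2)) \<le> ennreal B * ennreal (g1 r + g2 r)" for r
  proof (cases "0 < r \<and> r < R \<and> r < q")
    case True
    have lhs: "indicator {0<..<R} r * ennreal (r powr s) *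
        (indicator {y. r < norm y} y * ennreal (Ker s r y * c\<^sup>2)) = ennreal (r powr s) * ennreal (Ker s r y * c\<^sup>2)"
      using True by (simp add: q_def indicator_def)
    have K: "Ker s r y * c\<^sup>2 \<le> A * (r\<^sup>2 / (q\<^sup>2 - r\<^sup>2)) powr s / q ^ CARD('n) * c\<^sup>2"
      unfolding Ker_def q_def[symmetric] A_def
      using q by (intro mult_right_mono divide_right_mono) auto
    have pt: "r powr s * (r\<^sup>2 / (q\<^sup>2 - r\<^sup>2)) powr s \<le>
       2 * q powr (2 * s) * (r powr (-s) + (if q/2 \<le> r then (q - r) powr (-s) else 0))"
      using ptwise[OF s, of r q] True by simp
    have gg: "r powr (-s) + (if q/2 \<le> r then (q - r) powr (-s) else 0) \<le> g1 r + g2 r"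
      using True by (auto simp: g1_def g2_def indicator_def)
    have "r powr s * (A * (r\<^sup>2 / (q\<^sup>2 - r\<^sup>2)) powr s / q ^ CARD('n) * c\<^sup>2)
        = (r powr s * (r\<^sup>2 / (q\<^sup>2 - r\<^sup>2)) powr s) * (A * c\<^sup>2 / q ^ CARD('n))"
      by (simp add: algebra_simps)
    also have "\<dots> \<le> (2 * q powr (2 * s) * (g1 r + g2 r)) * (A * c\<^sup>2 / q ^ CARD('n))"
      using pt gg A0 q by (intro mult_right_mono order.trans[OF pt] mult_left_mono) auto
    also have "\<dots> = B * (g1 r + g2 r)" by (simp add: B_def algebra_simps add_divide_distrib)
    finally have real: "r powr s * (A * (r\<^sup>2 / (q\<^sup>2 - r\<^sup>2)) powr s / q ^ CARD('n) * c\<^sup>2) \<le> B * (g1 r + g2 r)" .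
    have "ennreal (r powr s) * ennreal (Ker s r y * c\<^sup>2) \<le> ennreal (r powr s) * ennreal (A * (r\<^sup>2 / (q\<^sup>2 - r\<^sup>2)) powr s / q ^ CARD('n) * c\<^sup>2)"
      using K by (intro mult_left_mono ennreal_leI) auto
    also have "\<dots> = ennreal (r powr s * (A * (r\<^sup>2 / (q\<^sup>2 - r\<^sup>2)) powr s / q ^ CARD('n) * c\<^sup>2))"
      using A0 q by (subst ennreal_mult[symmetric]) auto
    also have "\<dots> \<le> ennreal (B * (g1 r + g2 r))" using real by (rule ennreal_leI)
    also have "\<dots> = ennreal B * ennreal (g1 r + g2 r)" using B0 g10 g20 by (simp add: ennreal_mult add_nonneg_nonneg)
    finally show ?thesis using lhs by simp
  next
    case False
    then have "indicator {0<..<R} r * ennreal (r powr s) *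
        (indicator {y. r < norm y} y * ennreal (Ker s r y * c\<^sup>2)) = 0"
      by (auto simp: q_def indicator_def)
    then show ?thesis by (metis zero_le)
  qed
  define K where "K = R powr (1 - s) / (1 - s)"
  have I1: "(\<integral>\<^sup>+ r. ennreal (g1 r) \<partial>lborel) = ennreal K"
    unfolding g1_def K_def using int_pow[OF s, of R] R by simp
  have I2: "(\<integral>\<^sup>+ r. ennreal (g2 r) \<partial>lborel) \<le> ennreal K"
  proof (cases "q \<le> 2 * R")
    case True
    have "(\<integral>\<^sup>+ r. ennreal (g2 r) \<partial>lborel) = ennreal ((q/2) powr (1-s) / (1-s))"
      unfolding g2_def using True int_pow2[OF s, of q] q by simp
    also have "\<dots> \<le> ennreal K" unfolding K_def using True q s
      by (intro ennreal_leI divide_right_mono powr_mono2) auto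
    finally show ?thesis .
  next
    case False
    then show ?thesis by (simp add: g2_def)
  qed
  have "(\<integral>\<^sup>+ r. indicator {0<..<R} r * ennreal (r powr s) *
        (indicator {y. r < norm y} y * ennreal (Ker s r y * c\<^sup>2)) \<partial>lborel)
      \<le> (\<integral>\<^sup>+ r. ennreal B * ennreal (g1 r + g2 r) \<partial>lborel)"
    by (intro nn_integral_mono pw)
  also have "\<dots> = ennreal B * ((\<integral>\<^sup>+ r. ennreal (g1 r) \<partial>lborel) + (\<integral>\<^sup>+ r. ennreal (g2 r) \<partial>lborel))"
  proof -
    have "(\<lambda>r. ennreal (g1 r + g2 r)) = (\<lambda>r. ennreal (g1 r) + ennreal (g2 r))"
      using g10 g20 by (simp add: fun_eq_iff ennreal_plus)
    note eq = this
    have "(\<integral>\<^sup>+ r. ennreal (g1 r + g2 r) \<partial>lborel) = (\<integral>\<^sup>+ r. ennreal (g1 r) \<partial>lborel) + (\<integral>\<^sup>+ r. ennreal (g2 r) \<partial>lborel)"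
      unfolding eq by (rule nn_integral_add) measurable
    then show ?thesis by (simp add: nn_integral_cmult)
  qed
  also have "\<dots> \<le> ennreal B * (ennreal K + ennreal K)"
    using I1 I2 by (intro mult_left_mono add_mono) auto
  finally have main: "(\<integral>\<^sup>+ r. indicator {0<..<R} r * ennreal (r powr s) *
        (indicator {y. r < norm y} y * ennreal (Ker s r y * c\<^sup>2)) \<partial>lborel) \<le> ennreal B * (ennreal K + ennreal K)" .
  have K0: "0 \<le> K" using s by (simp add: K_def)
  have e1: "R powr (1 + s) = R powr (1 - s) * R powr (2 * s)"
    by (simp add: powr_add[symmetric] add.commute)
  have e2: "q ^ CARD('n) = q powr (real CARD('n) - 2 * s) * q powr (2 * s)"
    using q by (simp add: powr_add[symmetric] powr_realpow)
  have real: "1 / R powr (1 + s) * (B * (K + K)) = 4 * A / (1 - s) / R powr (2 * s) * (c\<^sup>2 / q powr (real CARD('n) - 2 * s))"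
  proof -
    have alg0: "1 / (a1 * a2) * (2 * A * c\<^sup>2 * b2 / (b1 * b2) * (a1 / d + a1 / d))
        = 4 * A / d / a2 * (c\<^sup>2 / b1)" if "0 < a1" "0 < a2" "0 < b1" "0 < b2" "0 < d" for a1 a2 b1 b2 d :: real
      using that by (simp add: field_simps)
    have alg: "1 / (a1 * a2) * (2 * A * c\<^sup>2 * b2 / (b1 * b2) * (a1 / (1 - s) + a1 / (1 - s)))
        = 4 * A / (1 - s) / a2 * (c\<^sup>2 / b1)" if "0 < a1" "0 < a2" "0 < b1" "0 < b2" for a1 a2 b1 b2 :: real
      using that s by (intro alg0) auto
    show ?thesis unfolding B_def K_def e1 e2 using R q by (intro alg) auto
  qed
  have "ennreal (1 / R powr (1 + s)) * (\<integral>\<^sup>+ r. indicator {0<..<R} r * ennreal (r powr s) *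
        (indicator {y. r < norm y} y * ennreal (Ker s r y * c\<^sup>2)) \<partial>lborel)
     \<le> ennreal (1 / R powr (1 + s)) * (ennreal B * (ennreal K + ennreal K))"
    using main by (rule mult_left_mono) simp
  also have "\<dots> = ennreal (1 / R powr (1 + s) * (B * (K + K)))"
    using B0 K0 R by (simp only: ennreal_plus[symmetric, OF K0 K0] ennreal_mult''[symmetric, of "B * (K + K)"] ennreal_mult''[symmetric, of "K + K" B] mult_nonneg_nonneg add_nonneg_nonneg)
  also have "\<dots> = ennreal (4 * A / (1 - s) / R powr (2 * s)) * ennreal (c\<^sup>2 / q powr (real CARD('n) - 2 * s))"
    unfolding real using A0 s R by (subst ennreal_mult[symmetric]) auto
  finally show ?thesis by (simp add: A_def q_def)
qed

lemma meas_nth[measurable]: "(\<lambda>x::real^'n. x $ i) \<in> borel_measurable borel"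
  by (intro borel_measurable_continuous_onI continuous_intros)

lemma meas_G:
  fixes u :: "real^'n \<Rightarrow> real"
  assumes "L1_half s u"
  shows "frac_grad_norm s u \<in> borel_measurable borel"
proof -
  have [measurable]: "u \<in> borel_measurable borel" using assms unfolding L1_half_def by simp
  have [measurable]: "frac_partial s u i \<in> borel_measurable borel" for i
  proof -
    have "(\<lambda>x. \<integral>y. (y $ i - x $ i) * (u y - u x) / norm (y - x) powr (real CARD('n) + s + 1) \<partial>lborel) \<in> borel_measurable (lborel :: (real^'n) measure)"
      apply (rule lborel.borel_measurable_lebesgue_integral) by (simp add: lborel_prod[symmetric])
    then show ?thesis unfolding frac_partial_def by simp
  qed
  have eq: "frac_grad_norm s u = (\<lambda>x. sqrt (\<Sum>i\<in>UNIV. (frac_partial s u i x)\<^sup>2))"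
    by (auto simp: frac_grad_norm_def norm_vec_def L2_set_def fun_eq_iff)
  show ?thesis unfolding eq by measurable
qed

theorem proposition4p3:
  fixes s :: real
  assumes "0 < s" and "s < 1"
  shows "\<exists>C>0. \<forall>(u :: real^'n \<Rightarrow> real) (\<epsilon>::real) (R::real).
           \<epsilon> > 0 \<longrightarrow> holder_loc (s + \<epsilon>) u \<longrightarrow> L1_half s u \<longrightarrow> 0 < R \<longrightarrow> R < 1 \<longrightarrow>
           J_ACF s u R \<le> ennreal (C / R powr (2 * s)) *
             (\<integral>\<^sup>+ x. ennreal ((frac_grad_norm s u x)\<^sup>2 / norm x powr (real CARD('n) - 2 * s)) \<partial>lborel)"
proof -
  note s = assms
  define C0 where "C0 = 4 * max (a_ns CARD('n) s) 0 / (1 - s)"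
  have C00: "0 \<le> C0" using s by (simp add: C0_def)
  have "0 < C0 + 1" using C00 by simp
  moreover have "J_ACF s u R \<le> ennreal ((C0 + 1) / R powr (2 * s)) *
             (\<integral>\<^sup>+ x. ennreal ((frac_grad_norm s u x)\<^sup>2 / norm x powr (real CARD('n) - 2 * s)) \<partial>lborel)"
    if L: "L1_half s u" and R: "0 < R" for u :: "real^'n \<Rightarrow> real" and R :: real
  proof -
    define G where "G = frac_grad_norm s u"
    have [measurable]: "G \<in> borel_measurable borel" unfolding G_def by (rule meas_G[OF L])
    define F where "F y r = indicator {0<..<R} r * ennreal (r powr s) *
        (indicator {y. r < norm y} y * ennreal (Ker s r y * (G y)\<^sup>2))" for y :: "real^'n" and r :: real
    have Fm: "case_prod F \<in> borel_measurable (lborel \<Otimes>\<^sub>M lborel)"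
      unfolding F_def Ker_def by measurable
    have Fm': "(\<lambda>(r, y). F y r) \<in> borel_measurable (lborel \<Otimes>\<^sub>M lborel)"
      unfolding F_def Ker_def by measurable
    have Hm: "(\<lambda>y. indicator {y. r < norm y} y * ennreal (Ker s r y * (G y)\<^sup>2)) \<in> borel_measurable (lborel :: (real^'n) measure)" for r :: real
      unfolding Ker_def by measurable
    have Phim: "(\<lambda>y. \<integral>\<^sup>+ r. F y r \<partial>lborel) \<in> borel_measurable (lborel :: (real^'n) measure)"
      using Fm by (rule lborel.borel_measurable_nn_integral)
    have Wm: "(\<lambda>x. ennreal ((G x)\<^sup>2 / norm x powr (real CARD('n) - 2 * s))) \<in> borel_measurable (lborel :: (real^'n) measure)"
      by measurable
    have "J_ACF s u R = ennreal (1 / R powr (1 + s)) * (\<integral>\<^sup>+ r. (\<integral>\<^sup>+ y. F y r \<partial>lborel) \<partial>lborel)"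
      unfolding J_ACF_def F_def G_def
      by (intro arg_cong2[where f="(*)"] refl nn_integral_cong nn_integral_cmult[symmetric] Hm[unfolded G_def])
    also have "(\<integral>\<^sup>+ r. (\<integral>\<^sup>+ y. F y r \<partial>lborel) \<partial>lborel) = (\<integral>\<^sup>+ y. (\<integral>\<^sup>+ r. F y r \<partial>lborel) \<partial>lborel)"
      using lborel_pair.Fubini'[OF Fm] by simp
    also have "ennreal (1 / R powr (1 + s)) * \<dots> = (\<integral>\<^sup>+ y. ennreal (1 / R powr (1 + s)) * (\<integral>\<^sup>+ r. F y r \<partial>lborel) \<partial>lborel)"
      using Phim by (rule nn_integral_cmult[symmetric])
    also have "\<dots> \<le> (\<integral>\<^sup>+ y. ennreal (C0 / R powr (2 * s)) * ennreal ((G y)\<^sup>2 / norm y powr (real CARD('n) - 2 * s)) \<partial>lborel)"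
      unfolding F_def C0_def by (intro nn_integral_mono per_y[OF s R])
    also have "\<dots> = ennreal (C0 / R powr (2 * s)) * (\<integral>\<^sup>+ y. ennreal ((G y)\<^sup>2 / norm y powr (real CARD('n) - 2 * s)) \<partial>lborel)"
      using Wm by (rule nn_integral_cmult)
    also have "\<dots> \<le> ennreal ((C0 + 1) / R powr (2 * s)) * (\<integral>\<^sup>+ y. ennreal ((G y)\<^sup>2 / norm y powr (real CARD('n) - 2 * s)) \<partial>lborel)"
      using R by (intro mult_right_mono ennreal_leI divide_right_mono) auto
    finally show ?thesis unfolding G_def .
  qed
  ultimately show ?thesis by blast
qed

end
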